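(* Let $p(a,b\mid x_0,x_1,y,y')$ be a non-signalling racbox. Then for every choice of inputs $x_0,x_1,y,y'\in\{0,1\}$, with probability one the outputs satisfy $$b = x_y\oplus a\oplus y' .$$ Equivalently, whenever $a\neq y'$ the box outputs $b = x_y\oplus 1$ with certainty (it acts as an "anti-RAC").
   Context: A box is a family of conditional probability distributions $p(a,b\mid x_0,x_1,y,y')$ with $a,b,x_0,x_1,y,y'\in\{0,1\}$. Alice holds inputs $x_0,x_1$ and output $a$; Bob holds inputs $y,y'$ and output $b$. A racbox is a box with two properties. First, it is non-signalling from Bob to Alice: $p(a\mid x_0,x_1,y,y')=\sum_b p(a,b\mid x_0,x_1,y,y')$ does not depend on $(y,y')$. Second, whenever $a=y'$ one has $b=x_y$, i.e. $p(a,b\mid x_0,x_1,y,y')=0$ whenever $a=y'$ and $b\neq x_y$. A racbox is non-signalling if, in addition, Bob's marginal $p(b\mid x_0,x_1,y,y')=\sum_a p(a,b\mid x_0,x_1,y,y')$ does not depend on $(x_0,x_1)$. *)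

theory Defs
  imports Complex_Main
begin

text \<open>Bits are modelled as bool (False = 0, True = 1); XOR is (\<noteq>).
  A box p a b x0 x1 y y' is p(a,b | x0,x1,y,y').\<close>

type_synonym box = "bool \<Rightarrow> bool \<Rightarrow> bool \<Rightarrow> bool \<Rightarrow> bool \<Rightarrow> bool \<Rightarrow> real"

definition sel :: "bool \<Rightarrow> bool \<Rightarrow> bool \<Rightarrow> bool" where
  "sel x0 x1 y = (if y then x1 else x0)"

definition is_box :: "box \<Rightarrow> bool" where
  "is_box p \<longleftrightarrow> (\<forall>a b x0 x1 y y'. p a b x0 x1 y y' \<ge> 0) \<and>
     (\<forall>x0 x1 y y'. (\<Sum>a\<in>UNIV. \<Sum>b\<in>UNIV. p a b x0 x1 y y') = 1)"

definition alice_marg :: "box \<Rightarrow> bool \<Rightarrow> bool \<Rightarrow> bool \<Rightarrow> bool \<Rightarrow> bool \<Rightarrow> real" where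
  "alice_marg p a x0 x1 y y' = (\<Sum>b\<in>UNIV. p a b x0 x1 y y')"

definition bob_marg :: "box \<Rightarrow> bool \<Rightarrow> bool \<Rightarrow> bool \<Rightarrow> bool \<Rightarrow> bool \<Rightarrow> real" where
  "bob_marg p b x0 x1 y y' = (\<Sum>a\<in>UNIV. p a b x0 x1 y y')"

definition racbox :: "box \<Rightarrow> bool" where
  "racbox p \<longleftrightarrow> is_box p \<and>
     (\<forall>a x0 x1 y y' z z'. alice_marg p a x0 x1 y y' = alice_marg p a x0 x1 z z') \<and>
     (\<forall>a b x0 x1 y y'. a = y' \<and> b \<noteq> sel x0 x1 y \<longrightarrow> p a b x0 x1 y y' = 0)"

definition ns_racbox :: "box \<Rightarrow> bool" where
  "ns_racbox p \<longleftrightarrow> racbox p \<and>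
     (\<forall>b x0 x1 y y' w0 w1. bob_marg p b x0 x1 y y' = bob_marg p b w0 w1 y y')"

end

theory Submission
  imports Defs
begin

lemma key:
  assumes "ns_racbox p" "a \<noteq> y'"
  shows "p a (sel x0 x1 y) x0 x1 y y' = 0"
proof -
  define z0 where "z0 = (if y then x0 else \<not> x0)"
  define z1 where "z1 = (if y then \<not> x1 else x1)"
  define s where "s = sel x0 x1 y"
  have sz: "sel z0 z1 y = (\<not> s)" unfolding s_def sel_def z0_def z1_def by auto
  have HH: "is_box p \<and> (\<forall>a x0 x1 y y' z z'. alice_marg p a x0 x1 y y' = alice_marg p a x0 x1 z z')
    \<and> (\<forall>a b x0 x1 y y'. a = y' \<and> b \<noteq> sel x0 x1 y \<longrightarrow> p a b x0 x1 y y' = 0)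
    \<and> (\<forall>b x0 x1 y y' w0 w1. bob_marg p b x0 x1 y y' = bob_marg p b w0 w1 y y')"
    using assms(1) unfolding ns_racbox_def racbox_def conj_assoc by assumption
  note H = HH[THEN conjunct1] HH[THEN conjunct2, THEN conjunct1] HH[THEN conjunct2, THEN conjunct2, THEN conjunct1]
    HH[THEN conjunct2, THEN conjunct2, THEN conjunct2]
  have HH2: "(\<forall>a b x0 x1 y y'. p a b x0 x1 y y' \<ge> 0) \<and> (\<forall>x0 x1 y y'. (\<Sum>a\<in>UNIV. \<Sum>b\<in>UNIV. p a b x0 x1 y y') = 1)"
    using H(1) unfolding is_box_def by assumption
  note H2 = HH2[THEN conjunct1] HH2[THEN conjunct2]
  note nn = H2(1)[rule_format]
  note nm = H2(2)[rule_format]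
  note al = H(2)[rule_format]
  note rz = H(3)[rule_format]
  note bm = H(4)[rule_format]
  have nx: "p c s x0 x1 y c + p (\<not> c) s x0 x1 y c + (p c (\<not> s) x0 x1 y c + p (\<not> c) (\<not> s) x0 x1 y c) = 1" for c
    using nm[of x0 x1 y c] by (cases c; cases s; simp add: UNIV_bool; linarith)
  have bx: "p c b x0 x1 y c + p (\<not> c) b x0 x1 y c = p c b z0 z1 y c + p (\<not> c) b z0 z1 y c" for b c
    using bm[of b x0 x1 y c z0 z1] unfolding bob_marg_def by (cases c; simp add: UNIV_bool; linarith)
  have ax: "p d s x0 x1 y c + p d (\<not> s) x0 x1 y c = p d s x0 x1 y (\<not> c) + p d (\<not> s) x0 x1 y (\<not> c)" for d c
    using al[of d x0 x1 y c y "\<not> c"] unfolding alice_marg_def by (cases s; simp add: UNIV_bool; linarith)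
  have az: "p d s z0 z1 y c + p d (\<not> s) z0 z1 y c = p d s z0 z1 y (\<not> c) + p d (\<not> s) z0 z1 y (\<not> c)" for d c
    using al[of d z0 z1 y c y "\<not> c"] unfolding alice_marg_def by (cases s; simp add: UNIV_bool; linarith)
  have r1: "p c (\<not> s) x0 x1 y c = 0" for c by (rule rz) (simp add: s_def)
  have r2: "p c s z0 z1 y c = 0" for c by (rule rz) (simp add: sz)
  have aa: "a = (\<not> y')" using assms(2) by auto
  have "p (\<not> y') s x0 x1 y y' = 0"
    using nx[of True] nx[of False] bx[of True s] bx[of False s] bx[of True "\<not> s"] bx[of False "\<not> s"]
      ax[of True True] ax[of True False] ax[of False True] ax[of False False]
      az[of True True] az[of True False] az[of False True] az[of False False]
      r1[of True] r1[of False] r2[of True] r2[of False]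
      nn[of True s x0 x1 y True] nn[of True s x0 x1 y False] nn[of False s x0 x1 y True] nn[of False s x0 x1 y False]
      nn[of True "\<not> s" x0 x1 y True] nn[of True "\<not> s" x0 x1 y False] nn[of False "\<not> s" x0 x1 y True] nn[of False "\<not> s" x0 x1 y False]
      nn[of True s z0 z1 y True] nn[of True s z0 z1 y False] nn[of False s z0 z1 y True] nn[of False s z0 z1 y False]
      nn[of True "\<not> s" z0 z1 y True] nn[of True "\<not> s" z0 z1 y False] nn[of False "\<not> s" z0 z1 y True] nn[of False "\<not> s" z0 z1 y False]
    by (cases y'; simp only: not_True_eq_False not_False_eq_True; linarith)
  then have "p a s x0 x1 y y' = 0" using aa by simp
  then show ?thesis by (simp add: s_def)
qed

theorem lemma1:
  assumes "ns_racbox p"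
  shows "\<forall>a b x0 x1 y y'. b \<noteq> ((sel x0 x1 y \<noteq> a) \<noteq> y') \<longrightarrow> p a b x0 x1 y y' = 0"
proof (intro allI impI)
  fix a b x0 x1 y y'
  assume h: "b \<noteq> ((sel x0 x1 y \<noteq> a) \<noteq> y')"
  show "p a b x0 x1 y y' = 0"
  proof (cases "a = y'")
    case True
    from assms have rz: "\<forall>a b x0 x1 y y'. a = y' \<and> b \<noteq> sel x0 x1 y \<longrightarrow> p a b x0 x1 y y' = 0"
      unfolding ns_racbox_def racbox_def by blast
    have "b \<noteq> sel x0 x1 y" using True h by auto
    then show ?thesis using rz True by blast
  next
    case False
    then have "b = sel x0 x1 y" using h by auto
    then show ?thesis using key[OF assms False] by simp
  qed
qed

end
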